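(* For each $n\ge 0$, $\mathrm{j}_n$ is the unique endomorphism $p$ of $\mathbf n$ in $\mathcal{TL}_0(\Bbbk)$ such that: (1) $p=\mathrm{id}_{\mathbf n}+x$ with $x$ a linear combination of Temperley–Lieb diagrams $\mathbf n\to\mathbf n$ having fewer than $n$ through-strands; (2) $p\circ p=p$; (3) $\mathrm{cap}_{\{i\},n}\circ p=0=p\circ\mathrm{cup}_{\{i\},n}$ for all $i\in\{1,\dots,n-1\}$.
   Context: $\Bbbk$ is a field. $\mathcal{TL}_0(\Bbbk)$ is the strict $\Bbbk$-linear monoidal category with objects $\mathbf 0,\mathbf 1,\dots$, $\mathbf m\otimes\mathbf n=\mathbf{m+n}$, generated by $\mathrm{cup}:\mathbf 0\to\mathbf 2$ and $\mathrm{cap}:\mathbf 2\to\mathbf 0$ subject to $(\mathrm{id}_{\mathbf 1}\otimes\mathrm{cap})\circ(\mathrm{cup}\otimes\mathrm{id}_{\mathbf 1})=0=(\mathrm{cap}\otimes\mathrm{id}_{\mathbf 1})\circ(\mathrm{id}_{\mathbf 1}\otimes\mathrm{cup})$ and $\mathrm{cap}\circ\mathrm{cup}=\mathrm{id}_{\mathbf 0}$. A Temperley–Lieb diagram is a nonzero morphism built from cup, cap and identities by $\otimes$ and $\circ$; through-strands join bottom to top. A subset $I\subseteq\{1,\dots,n\}$ is apt if $n\notin I$ and no two elements of $I$ are consecutive; $\mathrm{cap}_{I,n}:\mathbf n\to\mathbf{n-2|I|}$ has caps joining strands $i,i+1$ for $i\in I$ and through-strands elsewhere, $\mathrm{cup}_{I,n}$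 is its vertical reflection (so $\mathrm{cap}_{\{i\},n}=\mathrm{id}_{\mathbf{i-1}}\otimes\mathrm{cap}\otimes\mathrm{id}_{\mathbf{n-i-1}}$), and $\mathrm{j}_n=\sum_{I\text{ apt}}(-1)^{|I|}\mathrm{cup}_{I,n}\circ\mathrm{cap}_{I,n}$. *)

theory Defs
  imports Main
begin

text \<open>Boundary points of a diagram m -> n:
  Bot i (i < m, bottom, 0-based left to right) and Top j (j < n, top, 0-based).
  A Temperley-Lieb diagram is a fixed-point-free involution on these points
  (identity elsewhere) that is noncrossing (planar).  Hom-spaces are the
  k-linear combinations of diagrams, i.e. functions from diagrams to k
  supported on the diagrams m -> n.\<close>

datatype pt = Bot nat | Top nat

type_synonym diag = "pt \<Rightarrow> pt"
type_synonym 'k mor = "diag \<Rightarrow> 'k"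

definition pts :: "nat \<Rightarrow> nat \<Rightarrow> pt set" where
  "pts m n = Bot ` {..<m} \<union> Top ` {..<n}"

text \<open>Cyclic position on the boundary: bottom left to right, then top right to left.\<close>
fun cpos :: "nat \<Rightarrow> nat \<Rightarrow> pt \<Rightarrow> nat" where
  "cpos m n (Bot i) = i"
| "cpos m n (Top j) = m + (n - 1 - j)"

definition tl_diag :: "nat \<Rightarrow> nat \<Rightarrow> diag set" where
  "tl_diag m n = {d. (\<forall>x. x \<notin> pts m n \<longrightarrow> d x = x)
      \<and> (\<forall>x\<in>pts m n. d x \<in> pts m n \<and> d x \<noteq> x \<and> d (d x) = x)
      \<and> (\<forall>x\<in>pts m n. \<forall>y\<in>pts m n.
           \<not> (cpos m n x < cpos m n y \<and> cpos m n y < cpos m n (d x)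
               \<and> cpos m n (d x) < cpos m n (d y)))}"

definition through :: "nat \<Rightarrow> diag \<Rightarrow> nat" where
  "through m d = card {i. i < m \<and> (\<exists>j. d (Bot i) = Top j)}"

text \<open>Vertical composition of diagrams d1 : m -> k (below) and d2 : k -> n (above).
  The result is None (the zero morphism) iff some component of the glued picture
  contains a zigzag, which happens iff a cup of d1 and a cap of d2 meet at a
  middle point without closing a loop.  Closed loops evaluate to 1.\<close>
definition compose :: "nat \<Rightarrow> nat \<Rightarrow> nat \<Rightarrow> diag \<Rightarrow> diag \<Rightarrow> diag option" where
  "compose m k n d2 d1 =
    (if \<exists>a<k. \<exists>b c. d1 (Top a) = Top b \<and> d2 (Bot a) = Bot c \<and> b \<noteq> c then None
     else Some (\<lambda>x. case x of
        Bot i \<Rightarrow> (if i < m then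
                   (case d1 (Bot i) of
                      Bot i' \<Rightarrow> Bot i'
                    | Top a \<Rightarrow> (case d2 (Bot a) of
                         Top j \<Rightarrow> Top j
                       | Bot b \<Rightarrow> (case d1 (Top b) of Bot i' \<Rightarrow> Bot i' | Top c \<Rightarrow> Bot i)))
                 else Bot i)
      | Top j \<Rightarrow> (if j < n then
                   (case d2 (Top j) of
                      Top j' \<Rightarrow> Top j'
                    | Bot a \<Rightarrow> (case d1 (Top a) of
                         Bot i \<Rightarrow> Bot i
                       | Top b \<Rightarrow> (case d2 (Bot b) of Top j' \<Rightarrow> Top j' | Bot c \<Rightarrow> Top j)))
                 else Top j)))"

definition comp :: "nat \<Rightarrow> nat \<Rightarrow> nat \<Rightarrow> 'k::field mor \<Rightarrow> 'k mor \<Rightarrow> 'k mor" where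
  "comp m k n g f = (\<lambda>e. \<Sum>d2\<in>tl_diag k n. \<Sum>d1\<in>tl_diag m k.
       (if compose m k n d2 d1 = Some e then g d2 * f d1 else 0))"

definition dg :: "diag \<Rightarrow> 'k::field mor" where
  "dg d = (\<lambda>e. if e = d then 1 else 0)"

definition id_diag :: "nat \<Rightarrow> diag" where
  "id_diag n = (\<lambda>x. case x of Bot i \<Rightarrow> (if i < n then Top i else Bot i)
                             | Top j \<Rightarrow> (if j < n then Bot j else Top j))"

text \<open>cap_{I,n} : n -> n - 2|I|, with I a set of 1-based strand indices:
  strand s (Bot (s-1)) is capped with s+1 if s \<in> I, with s-1 if s-1 \<in> I,
  otherwise it is a through-strand to top position (s-1) - 2 |{i\<in>I. i < s}|.\<close>
definition cap_diag :: "nat set \<Rightarrow> nat \<Rightarrow> diag" where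
  "cap_diag I n = (\<lambda>x. case x of
      Bot t \<Rightarrow> (if t < n then
                  (if t + 1 \<in> I then Bot (t + 1)
                   else if t \<in> I then Bot (t - 1)
                   else Top (t - 2 * card {i\<in>I. i \<le> t}))
                else Bot t)
    | Top j \<Rightarrow> (if j < n - 2 * card I then
                  Bot (THE t. t < n \<and> t + 1 \<notin> I \<and> t \<notin> I \<and> t - 2 * card {i\<in>I. i \<le> t} = j)
                else Top j))"

fun flip_pt :: "pt \<Rightarrow> pt" where
  "flip_pt (Bot i) = Top i"
| "flip_pt (Top j) = Bot j"

definition cup_diag :: "nat set \<Rightarrow> nat \<Rightarrow> diag" where
  "cup_diag I n = (\<lambda>x. flip_pt (cap_diag I n (flip_pt x)))"

definition apt :: "nat \<Rightarrow> nat set set" where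
  "apt n = {I. I \<subseteq> {1..n} \<and> n \<notin> I \<and> (\<forall>i\<in>I. i + 1 \<notin> I)}"

definition jn :: "nat \<Rightarrow> 'k::field mor" where
  "jn n = (\<lambda>e. \<Sum>I\<in>apt n. (-1) ^ card I *
             comp n (n - 2 * card I) n (dg (cup_diag I n)) (dg (cap_diag I n)) e)"

definition JW_props :: "nat \<Rightarrow> 'k::field mor \<Rightarrow> bool" where
  "JW_props n p \<longleftrightarrow>
     (\<exists>x::'k mor. (\<forall>e. e \<notin> {d\<in>tl_diag n n. through n d < n} \<longrightarrow> x e = 0)
        \<and> p = (\<lambda>e. dg (id_diag n) e + x e))
   \<and> comp n n n p p = p
   \<and> (\<forall>i\<in>{1..n-1}. comp n n (n - 2) (dg (cap_diag {i} n)) p = (\<lambda>_. 0)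
                   \<and> comp (n - 2) n n p (dg (cup_diag {i} n)) = (\<lambda>_. 0))"

end

theory Submission
  imports Defs
begin


definition cf :: "nat \<Rightarrow> nat \<Rightarrow> diag \<Rightarrow> diag \<Rightarrow> diag" where
  "cf m n d2 d1 = (\<lambda>x. case x of
        Bot i \<Rightarrow> (if i < m then
                   (case d1 (Bot i) of
                      Bot i' \<Rightarrow> Bot i'
                    | Top a \<Rightarrow> (case d2 (Bot a) of
                         Top j \<Rightarrow> Top j
                       | Bot b \<Rightarrow> (case d1 (Top b) of Bot i' \<Rightarrow> Bot i' | Top c \<Rightarrow> Bot i)))
                 else Bot i)
      | Top j \<Rightarrow> (if j < n then
                   (case d2 (Top j) of
                      Top j' \<Rightarrow> Top j'
                    | Bot a \<Rightarrow> (case d1 (Top a) of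
                         Bot i \<Rightarrow> Bot i
                       | Top b \<Rightarrow> (case d2 (Bot b) of Top j' \<Rightarrow> Top j' | Bot c \<Rightarrow> Top j)))
                 else Top j))"

definition bad :: "nat \<Rightarrow> diag \<Rightarrow> diag \<Rightarrow> bool" where
  "bad k d2 d1 = (\<exists>a<k. \<exists>b c. d1 (Top a) = Top b \<and> d2 (Bot a) = Bot c \<and> b \<noteq> c)"

lemma compose_eq: "compose m k n d2 d1 = (if bad k d2 d1 then None else Some (cf m n d2 d1))"
  unfolding compose_def cf_def bad_def by simp

lemma tl_diagD1: "d \<in> tl_diag m n \<Longrightarrow> x \<notin> pts m n \<Longrightarrow> d x = x"
  unfolding tl_diag_def by auto
lemma tl_diagD2: "d \<in> tl_diag m n \<Longrightarrow> x \<in> pts m n \<Longrightarrow> d x \<in> pts m n"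
  unfolding tl_diag_def by auto
lemma tl_diagD3: "d \<in> tl_diag m n \<Longrightarrow> x \<in> pts m n \<Longrightarrow> d x \<noteq> x"
  unfolding tl_diag_def by auto
lemma tl_diagD4: "d \<in> tl_diag m n \<Longrightarrow> d (d x) = x"
  unfolding tl_diag_def by (cases "x \<in> pts m n") auto
lemma tl_diagD5: "d \<in> tl_diag m n \<Longrightarrow> x \<in> pts m n \<Longrightarrow> y \<in> pts m n \<Longrightarrow>
    \<not> (cpos m n x < cpos m n y \<and> cpos m n y < cpos m n (d x) \<and> cpos m n (d x) < cpos m n (d y))"
  unfolding tl_diag_def by blast
lemmas tl_diagD = tl_diagD1 tl_diagD2 tl_diagD3 tl_diagD4 tl_diagD5

lemma pts_simps[simp]: "Bot i \<in> pts m n \<longleftrightarrow> i < m" "Top j \<in> pts m n \<longleftrightarrow> j < n"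
  unfolding pts_def by auto

lemma finite_pts: "finite (pts m n)" unfolding pts_def by auto

lemma finite_tl_diag: "finite (tl_diag m n)"
proof -
  let ?A = "pts m n"
  let ?r = "\<lambda>d x. if x \<in> ?A then d x else Bot 0"
  have "inj_on ?r (tl_diag m n)"
  proof
    fix d d' assume d: "d \<in> tl_diag m n" and d': "d' \<in> tl_diag m n"
      and eq: "?r d = ?r d'"
    show "d = d'"
    proof
      fix x
      have "?r d x = ?r d' x" using eq by (rule fun_cong)
      then show "d x = d' x"
        using tl_diagD1[OF d, of x] tl_diagD1[OF d', of x]
        by (cases "x \<in> ?A") simp_all
    qed
  qed
  moreover have sub: "?r ` tl_diag m n \<subseteq> {f. \<forall>x. (x \<in> ?A \<longrightarrow> f x \<in> ?A) \<and> (x \<notin> ?A \<longrightarrow> f x = Bot 0)}"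
    using tl_diagD2 by auto
  moreover have fin: "finite {f. \<forall>x. (x \<in> ?A \<longrightarrow> f x \<in> ?A) \<and> (x \<notin> ?A \<longrightarrow> f x = Bot 0)}"
    by (intro finite_set_of_finite_funs finite_pts)
  ultimately have "finite (?r ` tl_diag m n)" using finite_subset[OF sub fin] by blast
  then show ?thesis using \<open>inj_on ?r (tl_diag m n)\<close> by (rule finite_imageD)
qed

lemma comp_dg_right:
  assumes "b \<in> tl_diag m k"
  shows "comp m k n g (dg b) e = (\<Sum>d2\<in>tl_diag k n. if compose m k n d2 b = Some e then g d2 else 0)"
proof -
  have "(\<Sum>d1\<in>tl_diag m k. if compose m k n d2 d1 = Some e then g d2 * dg b d1 else 0)
        = (if compose m k n d2 b = Some e then g d2 else 0)" for d2
  proof -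
    have "(\<Sum>d1\<in>tl_diag m k. if compose m k n d2 d1 = Some e then g d2 * dg b d1 else 0)
        = (\<Sum>d1\<in>tl_diag m k. if d1 = b then (if compose m k n d2 b = Some e then g d2 else 0) else 0)"
      by (intro sum.cong refl) (auto simp: dg_def)
    also have "\<dots> = (if compose m k n d2 b = Some e then g d2 else 0)"
      using assms by (simp add: sum.delta' finite_tl_diag)
    finally show ?thesis .
  qed
  then show ?thesis unfolding comp_def by simp
qed

lemma comp_dg_left:
  assumes "a \<in> tl_diag k n"
  shows "comp m k n (dg a) f e = (\<Sum>d1\<in>tl_diag m k. if compose m k n a d1 = Some e then f d1 else 0)"
proof -
  have "(\<Sum>d2\<in>tl_diag k n. \<Sum>d1\<in>tl_diag m k. if compose m k n d2 d1 = Some e then dg a d2 * f d1 else 0)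
     = (\<Sum>d2\<in>tl_diag k n. if d2 = a then (\<Sum>d1\<in>tl_diag m k. if compose m k n a d1 = Some e then f d1 else 0) else 0)"
  proof (intro sum.cong refl)
    fix d2 assume "d2 \<in> tl_diag k n"
    show "(\<Sum>d1\<in>tl_diag m k. if compose m k n d2 d1 = Some e then dg a d2 * f d1 else 0)
      = (if d2 = a then (\<Sum>d1\<in>tl_diag m k. if compose m k n a d1 = Some e then f d1 else 0) else 0)"
      unfolding dg_def by (cases "d2 = a") (simp_all cong: if_cong)
  qed
  also have "\<dots> = (\<Sum>d1\<in>tl_diag m k. if compose m k n a d1 = Some e then f d1 else 0)"
    using assms by (simp add: sum.delta' finite_tl_diag)
  finally show ?thesis unfolding comp_def .
qed

lemma comp_dg_dg:
  assumes "a \<in> tl_diag k n" "b \<in> tl_diag m k"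
  shows "comp m k n (dg a) (dg b) = (case compose m k n a b of None \<Rightarrow> (\<lambda>_. 0) | Some e \<Rightarrow> dg e)"
proof
  fix e
  have "comp m k n (dg a) (dg b) e = (\<Sum>d1\<in>tl_diag m k. if d1 = b then (if compose m k n a b = Some e then 1 else 0) else 0)"
    unfolding comp_dg_left[OF assms(1)] by (intro sum.cong refl) (auto simp: dg_def)
  also have "\<dots> = (if compose m k n a b = Some e then 1 else 0)"
    using assms by (simp add: sum.delta' finite_tl_diag)
  finally show "comp m k n (dg a) (dg b) e = (case compose m k n a b of None \<Rightarrow> (\<lambda>_. 0) | Some e \<Rightarrow> dg e) e"
    by (auto simp: dg_def split: option.splits)
qed


section \<open>Elementary cap/cup\<close>

definition sh :: "nat \<Rightarrow> nat \<Rightarrow> nat" where "sh a s = (if s < a then s else s + 2)"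
definition ush :: "nat \<Rightarrow> nat \<Rightarrow> nat" where "ush a t = (if t < a then t else t - 2)"

lemma cap1_Bot: "cap_diag {Suc a} n (Bot t) =
   (if t < n then (if t = a then Bot (Suc a) else if t = Suc a then Bot a else Top (ush a t)) else Bot t)"
proof -
  have "card {i \<in> {Suc a}. i \<le> t} = (if Suc a \<le> t then 1 else 0)"
    by (cases "Suc a \<le> t") (auto simp: Collect_conv_if)
  then show ?thesis unfolding cap_diag_def ush_def by auto
qed

lemma cap1_Top: assumes "Suc a < n"
  shows "cap_diag {Suc a} n (Top j) = (if j < n - 2 then Bot (sh a j) else Top j)"
proof -
  have c: "card {i \<in> {Suc a}. i \<le> t} = (if Suc a \<le> t then 1 else 0)" for t
    by (cases "Suc a \<le> t") (auto simp: Collect_conv_if)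
  have "(THE t. t < n \<and> t + 1 \<notin> {Suc a} \<and> t \<notin> {Suc a} \<and> t - 2 * card {i \<in> {Suc a}. i \<le> t} = j) = sh a j"
    if "j < n - 2"
  proof (rule the_equality)
    show "sh a j < n \<and> sh a j + 1 \<notin> {Suc a} \<and> sh a j \<notin> {Suc a} \<and> sh a j - 2 * card {i \<in> {Suc a}. i \<le> sh a j} = j"
      using that unfolding c sh_def by auto
  next
    fix t assume "t < n \<and> t + 1 \<notin> {Suc a} \<and> t \<notin> {Suc a} \<and> t - 2 * card {i \<in> {Suc a}. i \<le> t} = j"
    then show "t = sh a j" unfolding c sh_def by (auto split: if_splits)
  qed
  then show ?thesis unfolding cap_diag_def by auto
qed

lemma cup1_Bot: assumes "Suc a < n" "s < n - 2"
  shows "cup_diag {Suc a} n (Bot s) = Top (sh a s)"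
  using assms by (simp add: cup_diag_def cap1_Top)

lemma cup1_Top: assumes "Suc a < n" "y < n"
  shows "cup_diag {Suc a} n (Top y) = (if y = a then Top (Suc a) else if y = Suc a then Top a else Bot (ush a y))"
  using assms by (simp add: cup_diag_def cap1_Bot)

lemma sh_ush: "t \<noteq> a \<Longrightarrow> t \<noteq> Suc a \<Longrightarrow> sh a (ush a t) = t"
  unfolding sh_def ush_def by auto

lemma ush_less: "Suc a < n \<Longrightarrow> t < n \<Longrightarrow> t \<noteq> a \<Longrightarrow> t \<noteq> Suc a \<Longrightarrow> ush a t < n - 2"
  unfolding ush_def by auto

lemma sh_less: "s < n - 2 \<Longrightarrow> sh a s < n" unfolding sh_def by auto
lemma sh_ne: "sh a s \<noteq> a" "sh a s \<noteq> Suc a" unfolding sh_def by auto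
lemma ush_sh: "ush a (sh a s) = s" unfolding sh_def ush_def by auto
lemma inj_sh: "inj (sh a)" by (metis injI ush_sh)

definition isTop :: "pt \<Rightarrow> bool" where "isTop x = (\<exists>j. x = Top j)"

lemma isTop_simps[simp]: "isTop (Top j)" "\<not> isTop (Bot i)" unfolding isTop_def by auto

lemma through_isTop: "through m d = card {i. i < m \<and> isTop (d (Bot i))}"
  unfolding through_def isTop_def by simp

lemma cf_cup_Bot_isTop:
  assumes "Suc a < n" "s < n - 2"
  shows "isTop (cf (n - 2) n D (cup_diag {Suc a} n) (Bot s)) = isTop (D (Bot (sh a s)))"
  using assms by (auto simp: cf_def cup1_Bot split: pt.splits)

lemma not_bad_cup:
  assumes "d \<in> tl_diag n n" "Suc a < n" "d (Bot a) = Bot (Suc a)"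
  shows "\<not> bad n d (cup_diag {Suc a} n)"
proof
  assume "bad n d (cup_diag {Suc a} n)"
  then obtain x b c where x: "x < n" "cup_diag {Suc a} n (Top x) = Top b" "d (Bot x) = Bot c" "b \<noteq> c"
    unfolding bad_def by blast
  have inv: "d (Bot (Suc a)) = Bot a" using tl_diagD4[OF assms(1), of "Bot a"] assms(3) by simp
  show False using x assms(3) inv by (auto simp: cup1_Top assms(2) split: if_splits)
qed

definition shp :: "nat \<Rightarrow> pt \<Rightarrow> pt" where
  "shp a x = (case x of Bot c \<Rightarrow> Bot (sh a c) | Top j \<Rightarrow> Top j)"

definition R :: "nat \<Rightarrow> nat \<Rightarrow> diag \<Rightarrow> diag" where
  "R a n f x = (case x of Bot t \<Rightarrow> if t < n then (if t = a then Bot (Suc a) else if t = Suc a then Bot a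
                     else shp a (f (Bot (ush a t)))) else Bot t
              | Top j \<Rightarrow> if j < n then shp a (f (Top j)) else Top j)"

lemma recover:
  assumes D: "D \<in> tl_diag n n" and a: "Suc a < n" and Da: "D (Bot a) = Bot (Suc a)"
  shows "R a n (cf (n - 2) n D (cup_diag {Suc a} n)) = D"
proof
  fix x
  have inv: "D (Bot (Suc a)) = Bot a" using tl_diagD4[OF D, of "Bot a"] Da by simp
  let ?c = "cup_diag {Suc a} n"
  show "R a n (cf (n - 2) n D ?c) x = D x"
  proof (cases x)
    case (Bot t)
    show ?thesis
    proof (cases "t < n \<and> t \<noteq> a \<and> t \<noteq> Suc a")
      case True
      have u: "ush a t < n - 2" using True ush_less a by blast
      have cB: "?c (Bot (ush a t)) = Top t" using cup1_Bot[OF a u] True sh_ush by simp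
      show ?thesis
      proof (cases "D (Bot t)")
        case (Bot b)
        have "b < n" using tl_diagD2[OF D, of "Bot t"] True Bot by simp
        moreover have "b \<noteq> a" using Bot Da True by (metis D tl_diagD4 pt.inject(1))
        moreover have "b \<noteq> Suc a" using Bot inv True by (metis D tl_diagD4 pt.inject(1))
        ultimately have "?c (Top b) = Bot (ush a b)" by (simp add: cup1_Top a)
        then show ?thesis using True Bot \<open>x = Bot t\<close> u cB \<open>b \<noteq> a\<close> \<open>b \<noteq> Suc a\<close>
          by (simp add: R_def cf_def shp_def sh_ush)
      next
        case (Top j)
        then show ?thesis using True \<open>x = Bot t\<close> u cB by (simp add: R_def cf_def shp_def)
      qed
    next
      case False
      then show ?thesis using Bot Da inv tl_diagD1[OF D, of x] by (auto simp: R_def)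
    qed
  next
    case (Top j)
    show ?thesis
    proof (cases "j < n")
      case True
      show ?thesis
      proof (cases "D (Top j)")
        case (Bot y)
        have "y < n" using tl_diagD2[OF D, of "Top j"] True Bot by simp
        moreover have "y \<noteq> a" using Bot Da by (metis D tl_diagD4 pt.distinct(1))
        moreover have "y \<noteq> Suc a" using Bot inv by (metis D tl_diagD4 pt.distinct(1))
        ultimately have "?c (Top y) = Bot (ush a y)" by (simp add: cup1_Top a)
        then show ?thesis using True Bot \<open>x = Top j\<close> \<open>y \<noteq> a\<close> \<open>y \<noteq> Suc a\<close>
          by (simp add: R_def cf_def shp_def sh_ush)
      next
        case (Top j')
        then show ?thesis using True \<open>x = Top j\<close> by (simp add: R_def cf_def shp_def)
      qed
    next
      case False
      then show ?thesis using Top tl_diagD1[OF D, of x] by (auto simp: R_def)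
    qed
  qed
qed


lemma through_step:
  assumes d: "d \<in> tl_diag n n" and d': "d' \<in> tl_diag n n" and a: "Suc a < n"
    and da: "d (Bot a) = Bot (Suc a)"
    and eq: "compose (n - 2) n n d' (cup_diag {Suc a} n) = compose (n - 2) n n d (cup_diag {Suc a} n)"
    and ne: "d' \<noteq> d"
  shows "through n d' = through n d + 2"
proof -
  let ?c = "cup_diag {Suc a} n"
  have nbd: "\<not> bad n d ?c" by (rule not_bad_cup[OF d a da])
  then have nbd': "\<not> bad n d' ?c" and cfeq: "cf (n - 2) n d' ?c = cf (n - 2) n d ?c"
    using eq by (auto simp: compose_eq split: if_splits)
  have cTa: "?c (Top a) = Top (Suc a)" and cTa1: "?c (Top (Suc a)) = Top a"
    using a by (simp_all add: cup1_Top)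
  have d'a: "isTop (d' (Bot a))"
  proof (cases "d' (Bot a)")
    case (Bot b)
    have "b = Suc a"
    proof (rule ccontr)
      assume "b \<noteq> Suc a"
      then have "bad n d' ?c" unfolding bad_def using a cTa Bot by (intro exI[of _ a]) auto
      then show False using nbd' by simp
    qed
    then have "d' = d" using recover[OF d' a] recover[OF d a da] cfeq Bot by metis
    then show ?thesis using ne by simp
  qed simp
  have d'a1: "isTop (d' (Bot (Suc a)))"
  proof (cases "d' (Bot (Suc a))")
    case (Bot b)
    have "b = a"
    proof (rule ccontr)
      assume "b \<noteq> a"
      then have "bad n d' ?c" unfolding bad_def using a cTa1 Bot by (intro exI[of _ "Suc a"]) auto
      then show False using nbd' by simp
    qed
    then have "d' (Bot a) = Bot (Suc a)" using tl_diagD4[OF d', of "Bot (Suc a)"] Bot by simp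
    then show ?thesis using d'a by simp
  qed simp
  have da1: "d (Bot (Suc a)) = Bot a" using tl_diagD4[OF d, of "Bot a"] da by simp
  define F where "F = cf (n - 2) n d ?c"
  define Tf where "Tf = {s. s < n - 2 \<and> isTop (F (Bot s))}"
  have hd: "isTop (F (Bot s)) = isTop (d (Bot (sh a s)))" if "s < n - 2" for s
    unfolding F_def by (rule cf_cup_Bot_isTop[OF a that])
  have hd': "isTop (F (Bot s)) = isTop (d' (Bot (sh a s)))" if "s < n - 2" for s
    unfolding F_def cfeq[symmetric] by (rule cf_cup_Bot_isTop[OF a that])
  have Td: "{i. i < n \<and> isTop (d (Bot i))} = sh a ` Tf"
  proof (intro equalityI subsetI)
    fix i assume "i \<in> {i. i < n \<and> isTop (d (Bot i))}"
    then have i: "i < n" "isTop (d (Bot i))" by auto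
    then have "i \<noteq> a" "i \<noteq> Suc a" using da da1 by auto
    moreover have "ush a i \<in> Tf" unfolding Tf_def
      using i ush_less[OF a i(1) \<open>i \<noteq> a\<close> \<open>i \<noteq> Suc a\<close>] hd[of "ush a i"] sh_ush[OF \<open>i \<noteq> a\<close> \<open>i \<noteq> Suc a\<close>] by simp
    ultimately show "i \<in> sh a ` Tf" by (metis sh_ush image_eqI)
  next
    fix i assume "i \<in> sh a ` Tf"
    then show "i \<in> {i. i < n \<and> isTop (d (Bot i))}" unfolding Tf_def using hd sh_less by auto
  qed
  have Td': "{i. i < n \<and> isTop (d' (Bot i))} = insert a (insert (Suc a) (sh a ` Tf))"
  proof (intro equalityI subsetI)
    fix i assume "i \<in> {i. i < n \<and> isTop (d' (Bot i))}"
    then have i: "i < n" "isTop (d' (Bot i))" by auto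
    show "i \<in> insert a (insert (Suc a) (sh a ` Tf))"
    proof (cases "i = a \<or> i = Suc a")
      case False
      then have ne: "i \<noteq> a" "i \<noteq> Suc a" by auto
      have "ush a i \<in> Tf" unfolding Tf_def
        using i ush_less[OF a i(1) ne] hd'[of "ush a i"] sh_ush[OF ne] by simp
      then show ?thesis using sh_ush[OF ne] by (metis image_eqI insertI2)
    qed auto
  next
    fix i assume "i \<in> insert a (insert (Suc a) (sh a ` Tf))"
    then show "i \<in> {i. i < n \<and> isTop (d' (Bot i))}" unfolding Tf_def using hd' sh_less d'a d'a1 a by auto
  qed
  have fin: "finite Tf" unfolding Tf_def by simp
  have "card (sh a ` Tf) = card Tf" by (rule card_image) (meson inj_sh inj_on_subset subset_UNIV)
  moreover have "a \<notin> sh a ` Tf" "Suc a \<notin> sh a ` Tf" using sh_ne by (metis imageE)+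
  ultimately show ?thesis unfolding through_isTop Td Td' using fin by simp
qed

lemma adjacent_cap:
  assumes d: "d \<in> tl_diag n n" and th: "through n d < n"
  shows "\<exists>a. Suc a < n \<and> d (Bot a) = Bot (Suc a)"
proof -
  have "\<exists>i<n. \<not> isTop (d (Bot i))"
  proof (rule ccontr)
    assume "\<not> ?thesis"
    then have "{i. i < n \<and> isTop (d (Bot i))} = {..<n}" by auto
    then show False using th unfolding through_isTop by simp
  qed
  then obtain i j where ij: "i < n" "d (Bot i) = Bot j"
    by (metis isTop_simps(1) pt.exhaust)
  have jn: "j < n" using tl_diagD2[OF d, of "Bot i"] ij by simp
  have jne: "j \<noteq> i" using tl_diagD3[OF d, of "Bot i"] ij by simp
  obtain i j where ij2: "i < j" "j < n" "d (Bot i) = Bot j"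
  proof (cases "i < j")
    case True then show ?thesis using that ij jn by blast
  next
    case False
    then have "j < i" using jne by simp
    moreover have "d (Bot j) = Bot i" using tl_diagD4[OF d, of "Bot i"] ij by simp
    ultimately show ?thesis using that ij by blast
  qed
  have main: "\<And>w i j. j - i = w \<Longrightarrow> i < j \<Longrightarrow> j < n \<Longrightarrow> d (Bot i) = Bot j \<Longrightarrow> \<exists>a. Suc a < n \<and> d (Bot a) = Bot (Suc a)"
  proof -
    fix w
    show "\<And>i j. j - i = w \<Longrightarrow> i < j \<Longrightarrow> j < n \<Longrightarrow> d (Bot i) = Bot j \<Longrightarrow> \<exists>a. Suc a < n \<and> d (Bot a) = Bot (Suc a)"
    proof (induction w rule: less_induct)
      case (less w i j)
      show ?case
      proof (cases "j = Suc i")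
        case True then show ?thesis using less by blast
      next
        case False
        then have si: "Suc i < j" using less by simp
        let ?y = "Bot (Suc i)"
        have yp: "?y \<in> pts n n" using si less by simp
        have dyp: "d ?y \<in> pts n n" using tl_diagD2[OF d yp] .
        have ncr: "\<not> (cpos n n (Bot i) < cpos n n ?y \<and> cpos n n ?y < cpos n n (d (Bot i)) \<and> cpos n n (d (Bot i)) < cpos n n (d ?y))"
          using tl_diagD5[OF d, of "Bot i" ?y] less yp by simp
        show ?thesis
        proof (cases "d ?y")
          case (Top t)
          then show ?thesis using ncr less si by simp
        next
          case (Bot k)
          have kn: "k < n" using dyp Bot by simp
          have "k \<noteq> j"
          proof
            assume "k = j"
            then have "d (d ?y) = d (d (Bot i))" using Bot less by simp
            then show False using tl_diagD4[OF d] by simp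
          qed
          moreover have "k \<noteq> Suc i" using tl_diagD3[OF d yp] Bot by simp
          moreover have "k \<noteq> i"
          proof
            assume "k = i"
            then have "d (d ?y) = d (Bot i)" using Bot by simp
            then show False using tl_diagD4[OF d] less si by simp
          qed
          moreover have "\<not> j < k" using ncr Bot less si by simp
          ultimately consider "k < i" | "Suc i < k \<and> k < j" by linarith
          then show ?thesis
          proof cases
            case 1
            have "\<not> (cpos n n (Bot k) < cpos n n (Bot i) \<and> cpos n n (Bot i) < cpos n n (d (Bot k)) \<and> cpos n n (d (Bot k)) < cpos n n (d (Bot i)))"
              using tl_diagD5[OF d, of "Bot k" "Bot i"] kn less by simp
            moreover have "d (Bot k) = ?y" using tl_diagD4[OF d, of ?y] Bot by simp
            ultimately show ?thesis using 1 less si by simp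
          next
            case 2
            have w: "k - Suc i < w" using 2 less(2,3) by linarith
            have kn': "k < n" using 2 less(4) by linarith
            show ?thesis using less.IH[OF w refl _ kn'] 2 Bot by blast
          qed
        qed
      qed
    qed
  qed
  show ?thesis using main[OF refl ij2] .
qed


definition Low :: "nat \<Rightarrow> diag set" where "Low n = {d\<in>tl_diag n n. through n d < n}"

lemma uniq:
  fixes p q xp xq :: "'k::field mor"
  assumes cuptl: "\<And>i. i \<in> {1..n-1} \<Longrightarrow> cup_diag {i} n \<in> tl_diag (n - 2) n"
    and p: "p = (\<lambda>e. dg (id_diag n) e + xp e)" and xp: "\<forall>e. e \<notin> Low n \<longrightarrow> xp e = 0"
    and q: "q = (\<lambda>e. dg (id_diag n) e + xq e)" and xq: "\<forall>e. e \<notin> Low n \<longrightarrow> xq e = 0"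
    and pc: "\<forall>i\<in>{1..n-1}. comp (n - 2) n n p (dg (cup_diag {i} n)) = (\<lambda>_. 0)"
    and qc: "\<forall>i\<in>{1..n-1}. comp (n - 2) n n q (dg (cup_diag {i} n)) = (\<lambda>_. 0)"
  shows "p = q"
proof (rule ccontr)
  assume "p \<noteq> q"
  then obtain e0 where "p e0 \<noteq> q e0" by auto
  define r where "r = (\<lambda>e. xp e - xq e)"
  have pqr: "p e - q e = r e" for e unfolding p q r_def by simp
  define S where "S = {d\<in>tl_diag n n. r d \<noteq> 0}"
  have SL: "S \<subseteq> Low n"
  proof
    fix d assume "d \<in> S"
    then have "xp d - xq d \<noteq> 0" unfolding S_def r_def by simp
    then show "d \<in> Low n" using xp xq by (cases "d \<in> Low n") simp_all
  qed
  have e0S: "e0 \<in> S"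
  proof -
    have "r e0 \<noteq> 0" using pqr[of e0] \<open>p e0 \<noteq> q e0\<close> by (metis eq_iff_diff_eq_0)
    moreover then have "e0 \<in> Low n" unfolding r_def using xp xq by (cases "e0 \<in> Low n") simp_all
    ultimately show ?thesis unfolding S_def Low_def by simp
  qed
  have finS: "finite S" unfolding S_def using finite_tl_diag by simp
  define M where "M = Max (through n ` S)"
  have "M \<in> through n ` S" unfolding M_def using finS e0S by (intro Max_in) auto
  then obtain d where dS: "d \<in> S" and dM: "through n d = M" by auto
  have Mmax: "through n d' \<le> M" if "d' \<in> S" for d'
    unfolding M_def using finS that by (intro Max_ge) auto
  have dL: "d \<in> Low n" using SL dS by auto
  then have dtl: "d \<in> tl_diag n n" and dth: "through n d < n" unfolding Low_def by auto
  obtain a where a: "Suc a < n" and da: "d (Bot a) = Bot (Suc a)"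
    using adjacent_cap[OF dtl dth] by blast
  let ?c = "cup_diag {Suc a} n"
  have ai: "Suc a \<in> {1..n-1}" using a by simp
  have ctl: "?c \<in> tl_diag (n - 2) n" using cuptl[OF ai] .
  define f where "f = cf (n - 2) n d ?c"
  have cdf: "compose (n - 2) n n d ?c = Some f"
    unfolding f_def compose_eq using not_bad_cup[OF dtl a da] by simp
  have sp: "(\<Sum>d2\<in>tl_diag n n. if compose (n - 2) n n d2 ?c = Some f then p d2 else 0) = 0"
    using pc ai comp_dg_right[OF ctl, of n p f] by (metis (no_types, lifting))
  have sq: "(\<Sum>d2\<in>tl_diag n n. if compose (n - 2) n n d2 ?c = Some f then q d2 else 0) = 0"
    using qc ai comp_dg_right[OF ctl, of n q f] by (metis (no_types, lifting))
  have "(\<Sum>d2\<in>tl_diag n n. if compose (n - 2) n n d2 ?c = Some f then r d2 else 0)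
      = (\<Sum>d2\<in>tl_diag n n. (if compose (n - 2) n n d2 ?c = Some f then p d2 else 0)
                           - (if compose (n - 2) n n d2 ?c = Some f then q d2 else 0))"
    by (intro sum.cong refl) (simp add: pqr[symmetric])
  also have "\<dots> = 0" unfolding sum_subtractf sp sq by simp
  finally have s0: "(\<Sum>d2\<in>tl_diag n n. if compose (n - 2) n n d2 ?c = Some f then r d2 else 0) = 0" .
  have "(\<Sum>d2\<in>tl_diag n n. if compose (n - 2) n n d2 ?c = Some f then r d2 else 0)
      = (if compose (n - 2) n n d ?c = Some f then r d else 0)
        + (\<Sum>d2\<in>tl_diag n n - {d}. if compose (n - 2) n n d2 ?c = Some f then r d2 else 0)"
    using dtl finite_tl_diag by (simp add: sum.remove)
  also have "(\<Sum>d2\<in>tl_diag n n - {d}. if compose (n - 2) n n d2 ?c = Some f then r d2 else 0) = 0"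
  proof (intro sum.neutral ballI)
    fix d2 assume d2: "d2 \<in> tl_diag n n - {d}"
    show "(if compose (n - 2) n n d2 ?c = Some f then r d2 else 0) = 0"
    proof (cases "compose (n - 2) n n d2 ?c = Some f \<and> r d2 \<noteq> 0")
      case True
      then have "d2 \<in> S" using d2 unfolding S_def by simp
      then have "through n d2 \<le> M" by (rule Mmax)
      moreover have "through n d2 = through n d + 2"
        using through_step[OF dtl _ a da _] d2 True cdf by simp
      ultimately show ?thesis using dM by simp
    qed auto
  qed
  finally have "r d = 0" using s0 cdf by simp
  then show False using dS unfolding S_def by simp
qed



lemma aptD: "I \<in> apt n \<Longrightarrow> i \<in> I \<Longrightarrow> 0 < i \<and> i < n \<and> Suc i \<notin> I"
proof -
  assume a: "I \<in> apt n" "i \<in> I"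
  then have "i \<in> {1..n}" "n \<notin> I" "i + 1 \<notin> I" unfolding apt_def by auto
  then show ?thesis using a(2) by (cases "i = n") auto
qed
  
lemma apt_pred: "I \<in> apt n \<Longrightarrow> i \<in> I \<Longrightarrow> i - 1 \<notin> I"
proof
  assume a: "I \<in> apt n" "i \<in> I" "i - 1 \<in> I"
  then have "0 < i - 1" using aptD by blast
  then have "Suc (i - 1) = i" by simp
  then show False using aptD[OF a(1) a(3)] a(2) by simp
qed

lemma apt_finite: "I \<in> apt n \<Longrightarrow> finite I"
  unfolding apt_def by (auto intro: finite_subset)

lemma apt_subset: "I \<in> apt n \<Longrightarrow> J \<subseteq> I \<Longrightarrow> J \<in> apt n"
  unfolding apt_def by auto

lemma finite_apt: "finite (apt n)"
proof -
  have "apt n \<subseteq> Pow {1..n}" unfolding apt_def by auto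
  then show ?thesis by (rule finite_subset) simp
qed

lemma apt_empty: "{} \<in> apt n" unfolding apt_def by simp

definition pp :: "nat set \<Rightarrow> nat \<Rightarrow> bool" where "pp I t = (Suc t \<in> I \<or> t \<in> I)"

definition ph :: "nat set \<Rightarrow> nat \<Rightarrow> nat" where "ph I t = t - 2 * card {i\<in>I. i \<le> t}"

lemma card_pairs:
  assumes I: "I \<in> apt n" and J: "J \<subseteq> I"
  shows "card (J \<union> (\<lambda>i. i - 1) ` J) = 2 * card J"
proof -
  have fJ: "finite J" using apt_finite[OF I] J finite_subset by blast
  have pos: "\<And>i. i \<in> J \<Longrightarrow> 0 < i" using aptD[OF I] J by blast
  have disj: "J \<inter> (\<lambda>i. i - 1) ` J = {}"
  proof (rule ccontr)
    assume "J \<inter> (\<lambda>i. i - 1) ` J \<noteq> {}"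
    then obtain x i where "x \<in> J" "i \<in> J" "x = i - 1" by blast
    then have "Suc x = i" using pos by simp
    then show False using aptD[OF I, of x] \<open>x \<in> J\<close> \<open>i \<in> J\<close> J by blast
  qed
  have inj: "inj_on (\<lambda>i. i - 1) J"
  proof (rule inj_onI)
    fix x y assume "x \<in> J" "y \<in> J" "x - 1 = y - 1"
    then show "x = y" using pos[of x] pos[of y] by linarith
  qed
  have "card (J \<union> (\<lambda>i. i - 1) ` J) = card J + card ((\<lambda>i. i - 1) ` J)"
    using fJ disj by (intro card_Un_disjoint) auto
  also have "card ((\<lambda>i. i - 1) ` J) = card J" using card_image[OF inj] .
  finally show ?thesis by simp
qed

lemma pairset:
  assumes I: "I \<in> apt n" and t: "\<not> pp I t"
  shows "{s. s < t \<and> pp I s} = {i\<in>I. i \<le> t} \<union> (\<lambda>i. i - 1) ` {i\<in>I. i \<le> t}"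
proof (intro equalityI subsetI)
  fix s assume "s \<in> {s. s < t \<and> pp I s}"
  then have s: "s < t" "Suc s \<in> I \<or> s \<in> I" unfolding pp_def by auto
  show "s \<in> {i\<in>I. i \<le> t} \<union> (\<lambda>i. i - 1) ` {i\<in>I. i \<le> t}"
  proof (cases "s \<in> I")
    case True then show ?thesis using s by auto
  next
    case False
    then have "Suc s \<in> {i\<in>I. i \<le> t}" using s by auto
    then show ?thesis by (intro UnI2 image_eqI[of _ _ "Suc s"]) auto
  qed
next
  fix s assume "s \<in> {i\<in>I. i \<le> t} \<union> (\<lambda>i. i - 1) ` {i\<in>I. i \<le> t}"
  then show "s \<in> {s. s < t \<and> pp I s}"
  proof
    assume "s \<in> {i\<in>I. i \<le> t}"
    then show ?thesis using t unfolding pp_def by (cases "s = t") auto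
  next
    assume "s \<in> (\<lambda>i. i - 1) ` {i\<in>I. i \<le> t}"
    then obtain i where i: "i \<in> I" "i \<le> t" "s = i - 1" by auto
    then have "0 < i" using aptD[OF I] by blast
    then show ?thesis using i unfolding pp_def by auto
  qed
qed

lemma ph_rank:
  assumes I: "I \<in> apt n" and t: "\<not> pp I t"
  shows "ph I t = card {s. s < t \<and> \<not> pp I s}"
proof -
  have u: "{s. s < t \<and> \<not> pp I s} \<union> {s. s < t \<and> pp I s} = {..<t}" by auto
  have "card {s. s < t \<and> \<not> pp I s} + card {s. s < t \<and> pp I s}
      = card ({s. s < t \<and> \<not> pp I s} \<union> {s. s < t \<and> pp I s})"
    by (rule card_Un_disjoint[symmetric]) auto
  then have "t = card {s. s < t \<and> \<not> pp I s} + card {s. s < t \<and> pp I s}" unfolding u by simp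
  moreover have "card {s. s < t \<and> pp I s} = 2 * card {i\<in>I. i \<le> t}"
    unfolding pairset[OF I t] by (rule card_pairs[OF I]) auto
  ultimately show ?thesis unfolding ph_def by simp
qed

lemma NP_card:
  assumes I: "I \<in> apt n"
  shows "card {t. t < n \<and> \<not> pp I t} = n - 2 * card I"
proof -
  have eq: "{t. t < n \<and> pp I t} = I \<union> (\<lambda>i. i - 1) ` I"
  proof (intro equalityI subsetI)
    fix s assume "s \<in> {t. t < n \<and> pp I t}"
    then show "s \<in> I \<union> (\<lambda>i. i - 1) ` I" unfolding pp_def
      by (auto intro: image_eqI[of _ _ "Suc s"])
  next
    fix s assume "s \<in> I \<union> (\<lambda>i. i - 1) ` I"
    then show "s \<in> {t. t < n \<and> pp I t}"
    proof
      assume "s \<in> I"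
      then show ?thesis using aptD[OF I] by (auto simp: pp_def)
    next
      assume "s \<in> (\<lambda>i. i - 1) ` I"
      then obtain i where i: "i \<in> I" "s = i - 1" by auto
      then have "0 < i" "i < n" using aptD[OF I] by auto
      then show ?thesis using i by (auto simp: pp_def)
    qed
  qed
  have u: "{t. t < n \<and> \<not> pp I t} \<union> {t. t < n \<and> pp I t} = {..<n}" by auto
  have "card {t. t < n \<and> \<not> pp I t} + card {t. t < n \<and> pp I t}
      = card ({t. t < n \<and> \<not> pp I t} \<union> {t. t < n \<and> pp I t})"
    by (rule card_Un_disjoint[symmetric]) auto
  then have "n = card {t. t < n \<and> \<not> pp I t} + card {t. t < n \<and> pp I t}" unfolding u by simp
  moreover have "card {t. t < n \<and> pp I t} = 2 * card I"
    unfolding eq by (rule card_pairs[OF I]) auto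
  ultimately show ?thesis by simp
qed

lemma ph_strict:
  assumes I: "I \<in> apt n" and t: "\<not> pp I t" and t': "\<not> pp I t'" and lt: "t < t'"
  shows "ph I t < ph I t'"
proof -
  have "{s. s < t \<and> \<not> pp I s} \<subset> {s. s < t' \<and> \<not> pp I s}" using lt t by auto
  then have "card {s. s < t \<and> \<not> pp I s} < card {s. s < t' \<and> \<not> pp I s}"
    by (intro psubset_card_mono) auto
  then show ?thesis using ph_rank[OF I t] ph_rank[OF I t'] by simp
qed

lemma ph_inj:
  assumes I: "I \<in> apt n" and t: "\<not> pp I t" and t': "\<not> pp I t'" and eq: "ph I t = ph I t'"
  shows "t = t'"
proof (rule ccontr)
  assume "t \<noteq> t'"
  then consider "t < t'" | "t' < t" by linarith
  then show False using ph_strict[OF I t t'] ph_strict[OF I t' t] eq by cases auto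
qed

lemma ph_bound:
  assumes I: "I \<in> apt n" and tn: "t < n" and t: "\<not> pp I t"
  shows "ph I t < n - 2 * card I"
proof -
  have "{s. s < t \<and> \<not> pp I s} \<subset> {s. s < n \<and> \<not> pp I s}" using tn t by auto
  then have "card {s. s < t \<and> \<not> pp I s} < card {s. s < n \<and> \<not> pp I s}"
    by (intro psubset_card_mono) auto
  then show ?thesis using ph_rank[OF I t] NP_card[OF I] by simp
qed

lemma ph_surj:
  assumes I: "I \<in> apt n" and j: "j < n - 2 * card I"
  shows "\<exists>t. t < n \<and> \<not> pp I t \<and> ph I t = j"
proof -
  let ?N = "{t. t < n \<and> \<not> pp I t}"
  have sub: "ph I ` ?N \<subseteq> {..<n - 2 * card I}" using ph_bound[OF I] by auto
  have "inj_on (ph I) ?N" by (rule inj_onI) (use ph_inj[OF I] in auto)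
  then have "card (ph I ` ?N) = card ?N" by (rule card_image)
  then have "card (ph I ` ?N) = n - 2 * card I" using NP_card[OF I] by simp
  then have "ph I ` ?N = {..<n - 2 * card I}"
    using sub by (intro card_subset_eq) auto
  then have "j \<in> ph I ` ?N" using j by simp
  then show ?thesis by auto
qed

section \<open>general cap\<close>

lemma cap_Bot: "t < n \<Longrightarrow> cap_diag I n (Bot t) =
   (if Suc t \<in> I then Bot (Suc t) else if t \<in> I then Bot (t - 1) else Top (ph I t))"
  unfolding cap_diag_def ph_def by simp

lemma cap_Bot_out: "\<not> t < n \<Longrightarrow> cap_diag I n (Bot t) = Bot t"
  unfolding cap_diag_def by simp

lemma cap_Top_out: "\<not> j < n - 2 * card I \<Longrightarrow> cap_diag I n (Top j) = Top j"
  unfolding cap_diag_def by simp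

lemma cap_Top_ph:
  assumes I: "I \<in> apt n" and tn: "t < n" and t: "\<not> pp I t"
  shows "cap_diag I n (Top (ph I t)) = Bot t"
proof -
  have "(THE s. s < n \<and> s + 1 \<notin> I \<and> s \<notin> I \<and> s - 2 * card {i\<in>I. i \<le> s} = ph I t) = t"
  proof (rule the_equality)
    show "t < n \<and> t + 1 \<notin> I \<and> t \<notin> I \<and> t - 2 * card {i\<in>I. i \<le> t} = ph I t"
      using tn t unfolding pp_def ph_def by simp
  next
    fix s assume "s < n \<and> s + 1 \<notin> I \<and> s \<notin> I \<and> s - 2 * card {i\<in>I. i \<le> s} = ph I t"
    then have "\<not> pp I s" "ph I s = ph I t" unfolding pp_def ph_def by auto
    then show "s = t" using ph_inj[OF I _ t] by blast
  qed
  then show ?thesis using ph_bound[OF I tn t] unfolding cap_diag_def by simp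
qed

lemma cap_Top:
  assumes I: "I \<in> apt n" and j: "j < n - 2 * card I"
  obtains t where "t < n" "\<not> pp I t" "ph I t = j" "cap_diag I n (Top j) = Bot t"
  using ph_surj[OF I j] cap_Top_ph[OF I] by blast

lemma cap_tl:
  assumes I: "I \<in> apt n"
  shows "cap_diag I n \<in> tl_diag n (n - 2 * card I)"
proof -
  let ?d = "cap_diag I n"
  let ?m = "n - 2 * card I"
  have A: "?d x = x" if "x \<notin> pts n ?m" for x
    using that by (cases x) (auto simp: cap_Bot_out cap_Top_out)
  have B: "?d x \<in> pts n ?m \<and> ?d x \<noteq> x \<and> ?d (?d x) = x" if "x \<in> pts n ?m" for x
  proof (cases x)
    case (Bot t)
    then have tn: "t < n" using that by simp
    show ?thesis
    proof (cases "Suc t \<in> I")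
      case True
      then have "Suc t < n" "Suc (Suc t) \<notin> I" using aptD[OF I] by blast+
      then show ?thesis using True Bot tn by (simp add: cap_Bot)
    next
      case False
      show ?thesis
      proof (cases "t \<in> I")
        case True
        then have "0 < t" using aptD[OF I] by blast
        then show ?thesis using True False Bot tn by (simp add: cap_Bot) linarith
      next
        case False2: False
        then have "\<not> pp I t" using False unfolding pp_def by simp
        then show ?thesis using False False2 Bot tn ph_bound[OF I tn] cap_Top_ph[OF I tn]
          by (simp add: cap_Bot)
      qed
    qed
  next
    case (Top j)
    then have j: "j < ?m" using that by simp
    obtain t where t: "t < n" "\<not> pp I t" "ph I t = j" "?d (Top j) = Bot t"
      using cap_Top[OF I j] by blast
    have "?d (Bot t) = Top j" using t cap_Bot[OF t(1), of I] unfolding pp_def by simp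
    then show ?thesis using t Top by simp
  qed
  have C: "\<not> (cpos n ?m x < cpos n ?m y \<and> cpos n ?m y < cpos n ?m (?d x) \<and> cpos n ?m (?d x) < cpos n ?m (?d y))"
    if x: "x \<in> pts n ?m" and y: "y \<in> pts n ?m" for x y
  proof
    assume cr: "cpos n ?m x < cpos n ?m y \<and> cpos n ?m y < cpos n ?m (?d x) \<and> cpos n ?m (?d x) < cpos n ?m (?d y)"
    show False
    proof (cases x)
      case (Top j)
      have j: "j < ?m" using x Top by simp
      obtain t where "?d (Top j) = Bot t" "t < n" using cap_Top[OF I j] by blast
      then show False using cr Top by simp
    next
      case (Bot t)
      then have tn: "t < n" using x by simp
      show False
      proof (cases "pp I t")
        case True
        show False
        proof (cases "Suc t \<in> I")
          case True
          then have "?d x = Bot (Suc t)" using Bot tn by (simp add: cap_Bot)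
          then show False using cr Bot by (simp; linarith)
        next
          case False
          then have "t \<in> I" using \<open>pp I t\<close> unfolding pp_def by simp
          then have "?d x = Bot (t - 1)" using Bot tn False by (simp add: cap_Bot)
          then show False using cr Bot by (simp; linarith)
        qed
      next
        case False
        then have dx: "?d x = Top (ph I t)" using Bot tn by (simp add: cap_Bot pp_def)
        have pb: "ph I t < ?m" using ph_bound[OF I tn False] .
        show False
        proof (cases y)
          case (Top j')
          then have j': "j' < ?m" using y by simp
          obtain t' where "?d (Top j') = Bot t'" "t' < n" using cap_Top[OF I j'] by blast
          then show False using cr Top dx by simp
        next
          case (Bot t')
          then have t'n: "t' < n" using y by simp
          show False
          proof (cases "pp I t'")
            case True
            then have "\<exists>i. ?d y = Bot i" using Bot t'n by (auto simp: cap_Bot pp_def)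
            then obtain i where "?d y = Bot i" by blast
            moreover have "?d y \<in> pts n ?m" using B[OF y] by blast
            ultimately show False using cr dx by simp
          next
            case False2: False
            then have dy: "?d y = Top (ph I t')" using Bot t'n by (simp add: cap_Bot pp_def)
            have "t < t'" using cr Bot \<open>x = Bot t\<close> by simp
            then have "ph I t < ph I t'" using ph_strict[OF I False False2] by simp
            moreover have "ph I t' < ?m" using ph_bound[OF I t'n False2] .
            ultimately show False using cr dx dy by (simp; linarith)
          qed
        qed
      qed
    qed
  qed
  show ?thesis unfolding tl_diag_def using A B C by blast
qed


lemma flip_flip[simp]: "flip_pt (flip_pt x) = x" by (cases x) auto

lemma flip_pts: "flip_pt x \<in> pts k m \<longleftrightarrow> x \<in> pts m k" by (cases x) auto

lemma cpos_flip: "x \<in> pts m k \<Longrightarrow> cpos k m (flip_pt x) = (m + k - 1) - cpos m k x"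
  by (cases x) auto

lemma cpos_bound: "x \<in> pts m k \<Longrightarrow> cpos m k x < m + k"
  by (cases x) auto

lemma flip_tl:
  assumes d: "d \<in> tl_diag m k"
  shows "(\<lambda>x. flip_pt (d (flip_pt x))) \<in> tl_diag k m"
proof -
  let ?d = "\<lambda>x. flip_pt (d (flip_pt x))"
  have A: "?d x = x" if "x \<notin> pts k m" for x
    using tl_diagD1[OF d, of "flip_pt x"] that flip_pts[of x m k] by auto
  have B: "?d x \<in> pts k m \<and> ?d x \<noteq> x \<and> ?d (?d x) = x" if "x \<in> pts k m" for x
  proof -
    have fx: "flip_pt x \<in> pts m k" using that flip_pts[of "flip_pt x"] by simp
    have "d (flip_pt x) \<in> pts m k" using tl_diagD2[OF d fx] .
    then have "?d x \<in> pts k m" using flip_pts[of "d (flip_pt x)" k m] by simp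
    moreover have "?d x \<noteq> x" using tl_diagD3[OF d fx] by (metis flip_flip)
    moreover have "?d (?d x) = x" using tl_diagD4[OF d] by simp
    ultimately show ?thesis by blast
  qed
  have C: "\<not> (cpos k m x < cpos k m y \<and> cpos k m y < cpos k m (?d x) \<and> cpos k m (?d x) < cpos k m (?d y))"
    if x: "x \<in> pts k m" and y: "y \<in> pts k m" for x y
  proof
    assume cr: "cpos k m x < cpos k m y \<and> cpos k m y < cpos k m (?d x) \<and> cpos k m (?d x) < cpos k m (?d y)"
    define X where "X = flip_pt x"
    define Y where "Y = flip_pt y"
    have X: "X \<in> pts m k" and Y: "Y \<in> pts m k" unfolding X_def Y_def using x y flip_pts by (metis flip_flip)+
    have dX: "d X \<in> pts m k" and dY: "d Y \<in> pts m k" using tl_diagD2[OF d] X Y by blast+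
    have cx: "cpos k m x = (m + k - 1) - cpos m k X" using cpos_flip[OF X] unfolding X_def by simp
    have cy: "cpos k m y = (m + k - 1) - cpos m k Y" using cpos_flip[OF Y] unfolding Y_def by simp
    have cdx: "cpos k m (?d x) = (m + k - 1) - cpos m k (d X)" using cpos_flip[OF dX] unfolding X_def by simp
    have cdy: "cpos k m (?d y) = (m + k - 1) - cpos m k (d Y)" using cpos_flip[OF dY] unfolding Y_def by simp
    have b: "cpos m k X < m + k" "cpos m k Y < m + k" "cpos m k (d X) < m + k" "cpos m k (d Y) < m + k"
      using cpos_bound X Y dX dY by blast+
    have "cpos m k (d Y) < cpos m k (d X) \<and> cpos m k (d X) < cpos m k Y \<and> cpos m k Y < cpos m k X"
      using cr b unfolding cx cy cdx cdy by linarith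
    moreover have "d (d Y) = Y" "d (d X) = X" using tl_diagD4[OF d] by blast+
    ultimately show False using tl_diagD5[OF d dY dX] by simp
  qed
  show ?thesis unfolding tl_diag_def using A B C by blast
qed

lemma cup_tl:
  assumes I: "I \<in> apt n"
  shows "cup_diag I n \<in> tl_diag (n - 2 * card I) n"
proof -
  have "cup_diag I n = (\<lambda>x. flip_pt (cap_diag I n (flip_pt x)))"
    unfolding cup_diag_def by simp
  then show ?thesis using flip_tl[OF cap_tl[OF I]] by simp
qed

lemma single_apt: "i \<in> {1..n-1} \<Longrightarrow> {i} \<in> apt n"
  unfolding apt_def by auto

lemma cup1_tl: "i \<in> {1..n-1} \<Longrightarrow> cup_diag {i} n \<in> tl_diag (n - 2) n"
  using cup_tl[OF single_apt, of i n] by simp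

lemma cap1_tl: "i \<in> {1..n-1} \<Longrightarrow> cap_diag {i} n \<in> tl_diag n (n - 2)"
  using cap_tl[OF single_apt, of i n] by simp

section \<open>the diagrams e_I\<close>

definition ediag :: "nat set \<Rightarrow> nat \<Rightarrow> diag" where
  "ediag I n = (\<lambda>x. case x of
      Bot t \<Rightarrow> if t < n then (if Suc t \<in> I then Bot (Suc t) else if t \<in> I then Bot (t - 1) else Top t) else Bot t
    | Top j \<Rightarrow> if j < n then (if Suc j \<in> I then Top (Suc j) else if j \<in> I then Top (j - 1) else Bot j) else Top j)"

lemma ediag_Bot: "ediag I n (Bot t) =
   (if t < n then (if Suc t \<in> I then Bot (Suc t) else if t \<in> I then Bot (t - 1) else Top t) else Bot t)"
  unfolding ediag_def by simp

lemma ediag_Top: "ediag I n (Top j) =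
   (if j < n then (if Suc j \<in> I then Top (Suc j) else if j \<in> I then Top (j - 1) else Bot j) else Top j)"
  unfolding ediag_def by simp

lemma ediag_empty: "ediag {} n = id_diag n"
  by (rule ext) (simp add: ediag_def id_diag_def split: pt.split)

lemma compose_cup_cap:
  assumes I: "I \<in> apt n"
  shows "compose n (n - 2 * card I) n (cup_diag I n) (cap_diag I n) = Some (ediag I n)"
proof -
  let ?m = "n - 2 * card I"
  have nb: "\<not> bad ?m (cup_diag I n) (cap_diag I n)"
  proof
    assume "bad ?m (cup_diag I n) (cap_diag I n)"
    then obtain a b where a: "a < ?m" "cap_diag I n (Top a) = Top b" unfolding bad_def by blast
    obtain t where "cap_diag I n (Top a) = Bot t" using cap_Top[OF I a(1)] by blast
    then show False using a by simp
  qed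
  have "cf n n (cup_diag I n) (cap_diag I n) x = ediag I n x" for x
  proof (cases x)
    case (Bot t)
    show ?thesis
    proof (cases "t < n")
      case tn: True
      show ?thesis
      proof (cases "pp I t")
        case True
        then show ?thesis using Bot tn unfolding cf_def by (auto simp: cap_Bot ediag_Bot pp_def)
      next
        case False
        have "cup_diag I n (Bot (ph I t)) = Top t"
          unfolding cup_diag_def using cap_Top_ph[OF I tn False] by simp
        then show ?thesis using Bot tn False ph_bound[OF I tn False] unfolding cf_def
          by (auto simp: cap_Bot ediag_Bot pp_def)
      qed
    next
      case False
      then show ?thesis using Bot unfolding cf_def by (simp add: ediag_Bot)
    qed
  next
    case (Top j)
    show ?thesis
    proof (cases "j < n")
      case jn: True
      show ?thesis
      proof (cases "pp I j")
        case True
        then show ?thesis using Top jn unfolding cf_def cup_diag_def by (auto simp: cap_Bot ediag_Top pp_def)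
      next
        case False
        have "cup_diag I n (Top j) = Bot (ph I j)"
          unfolding cup_diag_def using False jn by (simp add: cap_Bot pp_def)
        then show ?thesis using Top jn False cap_Top_ph[OF I jn False] unfolding cf_def
          by (auto simp: ediag_Top pp_def)
      qed
    next
      case False
      then show ?thesis using Top unfolding cf_def by (simp add: ediag_Top)
    qed
  qed
  then show ?thesis using nb unfolding compose_eq by auto
qed


lemma ediag_tl:
  assumes I: "I \<in> apt n"
  shows "ediag I n \<in> tl_diag n n"
proof -
  let ?d = "ediag I n"
  have A: "?d x = x" if "x \<notin> pts n n" for x
    using that by (cases x) (auto simp: ediag_Bot ediag_Top)
  have B: "?d x \<in> pts n n \<and> ?d x \<noteq> x \<and> ?d (?d x) = x" if "x \<in> pts n n" for x
  proof (cases x)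
    case (Bot t)
    then have tn: "t < n" using that by simp
    show ?thesis
    proof (cases "Suc t \<in> I")
      case True
      then have "Suc t < n" "Suc (Suc t) \<notin> I" using aptD[OF I] by blast+
      then show ?thesis using True Bot tn by (simp add: ediag_Bot)
    next
      case False
      show ?thesis
      proof (cases "t \<in> I")
        case True
        then have "0 < t" using aptD[OF I] by blast
        then show ?thesis using True False Bot tn by (simp add: ediag_Bot) linarith
      next
        case False2: False
        then show ?thesis using False Bot tn by (simp add: ediag_Bot ediag_Top)
      qed
    qed
  next
    case (Top t)
    then have tn: "t < n" using that by simp
    show ?thesis
    proof (cases "Suc t \<in> I")
      case True
      then have "Suc t < n" "Suc (Suc t) \<notin> I" using aptD[OF I] by blast+
      then show ?thesis using True Top tn by (simp add: ediag_Top)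
    next
      case False
      show ?thesis
      proof (cases "t \<in> I")
        case True
        then have "0 < t" using aptD[OF I] by blast
        then show ?thesis using True False Top tn by (simp add: ediag_Top) linarith
      next
        case False2: False
        then show ?thesis using False Top tn by (simp add: ediag_Bot ediag_Top)
      qed
    qed
  qed
  have C: "\<not> (cpos n n x < cpos n n y \<and> cpos n n y < cpos n n (?d x) \<and> cpos n n (?d x) < cpos n n (?d y))"
    if x: "x \<in> pts n n" and y: "y \<in> pts n n" for x y
  proof
    assume cr: "cpos n n x < cpos n n y \<and> cpos n n y < cpos n n (?d x) \<and> cpos n n (?d x) < cpos n n (?d y)"
    have dy: "?d y \<in> pts n n" using B[OF y] by blast
    show False
    proof (cases x)
      case (Top j)
      then have jn: "j < n" using x by simp
      show False
      proof (cases "Suc j \<in> I")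
        case True
        then have "?d x = Top (Suc j)" using Top jn by (simp add: ediag_Top)
        then show False using cr Top by (simp; linarith)
      next
        case False
        show False
        proof (cases "j \<in> I")
          case True
          then have "0 < j" using aptD[OF I] by blast
          have "?d x = Top (j - 1)" using True False Top jn by (simp add: ediag_Top)
          then show False using cr Top \<open>0 < j\<close> jn by (simp; linarith)
        next
          case False2: False
          then have "?d x = Bot j" using False Top jn by (simp add: ediag_Top)
          then show False using cr Top jn by (simp; linarith)
        qed
      qed
    next
      case (Bot t)
      then have tn: "t < n" using x by simp
      show False
      proof (cases "Suc t \<in> I")
        case True
        then have "?d x = Bot (Suc t)" using Bot tn by (simp add: ediag_Bot)
        then show False using cr Bot by (simp; linarith)
      next
        case False
        show False
        proof (cases "t \<in> I")
          case True
          have "?d x = Bot (t - 1)" using True False Bot tn by (simp add: ediag_Bot)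
          then show False using cr Bot by (simp; linarith)
        next
          case False2: False
          then have dx: "?d x = Top t" using False Bot tn by (simp add: ediag_Bot)
          show False
          proof (cases y)
            case (Bot t')
            then have t'n: "t' < n" using y by simp
            have "t < t'" using cr Bot \<open>x = Bot t\<close> by simp
            show False
            proof (cases "pp I t'")
              case True
              have "\<exists>i. ?d y = Bot i" using Bot t'n True by (auto simp: ediag_Bot pp_def)
              then obtain i where "?d y = Bot i" by blast
              then show False using cr dx dy by (simp; linarith)
            next
              case False3: False
              then have "?d y = Top t'" using Bot t'n by (simp add: ediag_Bot pp_def)
              then show False using cr dx \<open>t < t'\<close> t'n by (simp; linarith)
            qed
          next
            case (Top j')
            then have j'n: "j' < n" using y by simp
            have "t < j'" using cr Top dx j'n tn by (simp; linarith)
            show False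
            proof (cases "Suc j' \<in> I")
              case True
              then have "?d y = Top (Suc j')" using Top j'n by (simp add: ediag_Top)
              then show False using cr dx \<open>t < j'\<close> by (simp; linarith)
            next
              case False3: False
              show False
              proof (cases "j' \<in> I")
                case True
                have "?d y = Top (j' - 1)" using True False3 Top j'n by (simp add: ediag_Top)
                then show False using cr dx \<open>t < j'\<close> j'n by (simp; linarith)
              next
                case False4: False
                then have "?d y = Bot j'" using False3 Top j'n by (simp add: ediag_Top)
                then show False using cr dx j'n by (simp; linarith)
              qed
            qed
          qed
        qed
      qed
    qed
  qed
  show ?thesis unfolding tl_diag_def using A B C by blast
qed

lemma ediag_through:
  assumes I: "I \<in> apt n"
  shows "through n (ediag I n) = n - 2 * card I"
proof -
  have "{i. i < n \<and> isTop (ediag I n (Bot i))} = {t. t < n \<and> \<not> pp I t}"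
    by (auto simp: ediag_Bot pp_def)
  then show ?thesis unfolding through_isTop using NP_card[OF I] by simp
qed

lemma ediag_Low:
  assumes I: "I \<in> apt n" and ne: "I \<noteq> {}"
  shows "ediag I n \<in> Low n"
proof -
  obtain i where i: "i \<in> I" using ne by blast
  then have "0 < i" "i < n" using aptD[OF I] by auto
  moreover have "card I > 0" using ne apt_finite[OF I] by (simp add: card_gt_0_iff)
  ultimately have "n - 2 * card I < n" by linarith
  then show ?thesis unfolding Low_def using ediag_tl[OF I] ediag_through[OF I] by simp
qed

lemma jn_eq: "(jn n :: 'k::field mor) = (\<lambda>e. \<Sum>I\<in>apt n. (-1) ^ card I * dg (ediag I n) e)"
proof
  fix e
  have "comp n (n - 2 * card I) n (dg (cup_diag I n)) (dg (cap_diag I n)) e = (dg (ediag I n) e :: 'k)"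
    if I: "I \<in> apt n" for I
    unfolding comp_dg_dg[OF cup_tl[OF I] cap_tl[OF I]] compose_cup_cap[OF I] by simp
  then show "(jn n :: 'k mor) e = (\<Sum>I\<in>apt n. (-1) ^ card I * dg (ediag I n) e)"
    unfolding jn_def by (intro sum.cong refl) simp
qed

lemma jn_prop1:
  "\<exists>x::'k::field mor. (\<forall>e. e \<notin> {d\<in>tl_diag n n. through n d < n} \<longrightarrow> x e = 0)
        \<and> (jn n :: 'k mor) = (\<lambda>e. dg (id_diag n) e + x e)"
proof -
  define x :: "'k mor" where "x = (\<lambda>e. \<Sum>I\<in>apt n - {{}}. (-1) ^ card I * dg (ediag I n) e)"
  have "(jn n :: 'k mor) = (\<lambda>e. dg (id_diag n) e + x e)"
  proof
    fix e
    have "(\<Sum>I\<in>apt n. (-1) ^ card I * (dg (ediag I n) e :: 'k))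
        = (-1) ^ card ({}::nat set) * dg (ediag {} n) e + (\<Sum>I\<in>apt n - {{}}. (-1) ^ card I * dg (ediag I n) e)"
      using finite_apt apt_empty by (rule sum.remove)
    then show "(jn n :: 'k mor) e = dg (id_diag n) e + x e"
      unfolding jn_eq x_def ediag_empty by simp
  qed
  moreover have "x e = 0" if "e \<notin> {d\<in>tl_diag n n. through n d < n}" for e
    unfolding x_def
  proof (intro sum.neutral ballI)
    fix I assume "I \<in> apt n - {{}}"
    then have "ediag I n \<in> Low n" using ediag_Low by blast
    then have "e \<noteq> ediag I n" using that unfolding Low_def by blast
    then show "(-1) ^ card I * dg (ediag I n) e = (0::'k)" unfolding dg_def by simp
  qed
  ultimately show ?thesis by blast
qed

section \<open>linearity\<close>

lemma comp_lin_left: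
  fixes w :: "'i \<Rightarrow> 'k::field" and g :: "'i \<Rightarrow> 'k mor"
  assumes A: "finite A"
  shows "comp m k n (\<lambda>e. \<Sum>I\<in>A. w I * g I e) h e' = (\<Sum>I\<in>A. w I * comp m k n (g I) h e')"
proof -
  have "comp m k n (\<lambda>e. \<Sum>I\<in>A. w I * g I e) h e'
      = (\<Sum>d2\<in>tl_diag k n. \<Sum>d1\<in>tl_diag m k. \<Sum>I\<in>A.
            w I * (if compose m k n d2 d1 = Some e' then g I d2 * h d1 else 0))"
    unfolding comp_def
    by (intro sum.cong refl) (simp add: sum_distrib_right sum_distrib_left mult.assoc)
  also have "\<dots> = (\<Sum>d2\<in>tl_diag k n. \<Sum>I\<in>A. \<Sum>d1\<in>tl_diag m k.
            w I * (if compose m k n d2 d1 = Some e' then g I d2 * h d1 else 0))"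
    by (intro sum.cong refl sum.swap)
  also have "\<dots> = (\<Sum>I\<in>A. \<Sum>d2\<in>tl_diag k n. \<Sum>d1\<in>tl_diag m k.
            w I * (if compose m k n d2 d1 = Some e' then g I d2 * h d1 else 0))"
    by (rule sum.swap)
  also have "\<dots> = (\<Sum>I\<in>A. w I * comp m k n (g I) h e')"
    unfolding comp_def by (simp add: sum_distrib_left)
  finally show ?thesis .
qed

lemma comp_lin_right:
  fixes w :: "'i \<Rightarrow> 'k::field" and g :: "'i \<Rightarrow> 'k mor"
  assumes A: "finite A"
  shows "comp m k n h (\<lambda>e. \<Sum>I\<in>A. w I * g I e) e' = (\<Sum>I\<in>A. w I * comp m k n h (g I) e')"
proof -
  have "comp m k n h (\<lambda>e. \<Sum>I\<in>A. w I * g I e) e'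
      = (\<Sum>d2\<in>tl_diag k n. \<Sum>d1\<in>tl_diag m k. \<Sum>I\<in>A.
            w I * (if compose m k n d2 d1 = Some e' then h d2 * g I d1 else 0))"
    unfolding comp_def
    by (intro sum.cong refl) (simp add: sum_distrib_right sum_distrib_left mult_ac)
  also have "\<dots> = (\<Sum>d2\<in>tl_diag k n. \<Sum>I\<in>A. \<Sum>d1\<in>tl_diag m k.
            w I * (if compose m k n d2 d1 = Some e' then h d2 * g I d1 else 0))"
    by (intro sum.cong refl sum.swap)
  also have "\<dots> = (\<Sum>I\<in>A. \<Sum>d2\<in>tl_diag k n. \<Sum>d1\<in>tl_diag m k.
            w I * (if compose m k n d2 d1 = Some e' then h d2 * g I d1 else 0))"
    by (rule sum.swap)
  also have "\<dots> = (\<Sum>I\<in>A. w I * comp m k n h (g I) e')"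
    unfolding comp_def by (simp add: sum_distrib_left)
  finally show ?thesis .
qed



lemma apt_insert:
  assumes I: "I \<in> apt n" and i: "0 < i" "i < n"
  shows "insert i I \<in> apt n \<longleftrightarrow> i - 1 \<notin> I \<and> Suc i \<notin> I"
proof
  assume "insert i I \<in> apt n"
  then show "i - 1 \<notin> I \<and> Suc i \<notin> I" using aptD[of "insert i I" n] i by (metis Suc_pred' insertCI)
next
  assume "i - 1 \<notin> I \<and> Suc i \<notin> I"
  then have h: "i - 1 \<notin> I" "Suc i \<notin> I" by auto
  have "\<forall>x\<in>insert i I. x + 1 \<notin> insert i I"
  proof
    fix x assume x: "x \<in> insert i I"
    show "x + 1 \<notin> insert i I"
    proof (cases "x = i")
      case True then show ?thesis using h by simp
    next
      case False
      then have "x \<in> I" using x by simp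
      moreover have "x + 1 \<noteq> i" using h \<open>x \<in> I\<close> by (metis add_diff_cancel_right')
      ultimately show ?thesis using aptD[OF I] by simp
    qed
  qed
  then show "insert i I \<in> apt n" using I i unfolding apt_def by auto
qed

lemma K_notbad:
  assumes I: "I \<in> apt n" and a: "Suc a < n" and h: "a \<notin> I" "Suc (Suc a) \<notin> I"
  shows "\<not> bad n (ediag I n) (cup_diag {Suc a} n)"
proof
  assume "bad n (ediag I n) (cup_diag {Suc a} n)"
  then obtain x b c where x: "x < n" "cup_diag {Suc a} n (Top x) = Top b" "ediag I n (Bot x) = Bot c" "b \<noteq> c"
    unfolding bad_def by blast
  show False using x a h by (auto simp: cup1_Top ediag_Bot split: if_splits)
qed

lemma K2:
  assumes I: "I \<in> apt n" and a: "Suc a < n" and h: "a \<notin> I" "Suc a \<notin> I" "Suc (Suc a) \<notin> I"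
  shows "compose (n - 2) n n (ediag I n) (cup_diag {Suc a} n)
       = compose (n - 2) n n (ediag (insert (Suc a) I) n) (cup_diag {Suc a} n)"
proof -
  have I': "insert (Suc a) I \<in> apt n" using apt_insert[OF I, of "Suc a"] a h by simp
  have nb: "\<not> bad n (ediag I n) (cup_diag {Suc a} n)" using K_notbad[OF I a h(1,3)] .
  have nb': "\<not> bad n (ediag (insert (Suc a) I) n) (cup_diag {Suc a} n)"
    using K_notbad[OF I' a] h aptD[OF I] by auto
  have "cf (n - 2) n (ediag I n) (cup_diag {Suc a} n) x = cf (n - 2) n (ediag (insert (Suc a) I) n) (cup_diag {Suc a} n) x" for x
    using a h
    by (cases x) (auto simp: cf_def cup1_Bot cup1_Top ediag_Bot ediag_Top sh_def ush_def split: pt.splits if_splits)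
  then show ?thesis using nb nb' unfolding compose_eq by auto
qed


lemma K1:
  assumes I: "I \<in> apt n" and a: "Suc a < n" and h: "a \<in> I \<or> Suc (Suc a) \<in> I"
  shows "compose (n - 2) n n (ediag I n) (cup_diag {Suc a} n) = None"
proof -
  have "bad n (ediag I n) (cup_diag {Suc a} n)"
  proof (cases "a \<in> I")
    case True
    then have "Suc a \<notin> I" using aptD[OF I] by blast
    then show ?thesis unfolding bad_def using True a
      by (intro exI[of _ a]) (auto simp: cup1_Top ediag_Bot)
  next
    case False
    then have "Suc (Suc a) \<in> I" using h by simp
    then show ?thesis unfolding bad_def using a
      by (intro exI[of _ "Suc a"]) (auto simp: cup1_Top ediag_Bot)
  qed
  then show ?thesis unfolding compose_eq by simp
qed

lemma K_notbad':
  assumes I: "I \<in> apt n" and a: "Suc a < n" and h: "a \<notin> I" "Suc (Suc a) \<notin> I"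
  shows "\<not> bad n (cap_diag {Suc a} n) (ediag I n)"
proof
  assume "bad n (cap_diag {Suc a} n) (ediag I n)"
  then obtain x b c where x: "x < n" "ediag I n (Top x) = Top b" "cap_diag {Suc a} n (Bot x) = Bot c" "b \<noteq> c"
    unfolding bad_def by blast
  show False using x a h by (auto simp: cap1_Bot ediag_Top split: if_splits)
qed

lemma K1':
  assumes I: "I \<in> apt n" and a: "Suc a < n" and h: "a \<in> I \<or> Suc (Suc a) \<in> I"
  shows "compose n n (n - 2) (cap_diag {Suc a} n) (ediag I n) = None"
proof -
  have "bad n (cap_diag {Suc a} n) (ediag I n)"
  proof (cases "a \<in> I")
    case True
    then have "Suc a \<notin> I" using aptD[OF I] by blast
    then show ?thesis unfolding bad_def using True a
      by (intro exI[of _ a]) (auto simp: cap1_Bot ediag_Top)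
  next
    case False
    then have "Suc (Suc a) \<in> I" using h by simp
    then show ?thesis unfolding bad_def using a
      by (intro exI[of _ "Suc a"]) (auto simp: cap1_Bot ediag_Top)
  qed
  then show ?thesis unfolding compose_eq by simp
qed

lemma K2':
  assumes I: "I \<in> apt n" and a: "Suc a < n" and h: "a \<notin> I" "Suc a \<notin> I" "Suc (Suc a) \<notin> I"
  shows "compose n n (n - 2) (cap_diag {Suc a} n) (ediag I n)
       = compose n n (n - 2) (cap_diag {Suc a} n) (ediag (insert (Suc a) I) n)"
proof -
  have I': "insert (Suc a) I \<in> apt n" using apt_insert[OF I, of "Suc a"] a h by simp
  have nb: "\<not> bad n (cap_diag {Suc a} n) (ediag I n)" using K_notbad'[OF I a h(1,3)] .
  have nb': "\<not> bad n (cap_diag {Suc a} n) (ediag (insert (Suc a) I) n)"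
    using K_notbad'[OF I' a] h aptD[OF I] by auto
  have "cf n (n - 2) (cap_diag {Suc a} n) (ediag I n) x = cf n (n - 2) (cap_diag {Suc a} n) (ediag (insert (Suc a) I) n) x" for x
    using a h
    by (cases x) (auto simp: cf_def cap1_Bot cap1_Top ediag_Bot ediag_Top sh_def ush_def split: pt.splits if_splits)
  then show ?thesis using nb nb' unfolding compose_eq by auto
qed

lemma K3_bad:
  assumes I: "I \<in> apt n" and J: "J \<in> apt n" and K: "I \<union> J \<notin> apt n"
  shows "compose n n n (ediag J n) (ediag I n) = None"
proof -
  have "\<exists>x\<in>I \<union> J. x + 1 \<in> I \<union> J" using K I J unfolding apt_def by auto
  then obtain x where x: "x \<in> I \<union> J" "Suc x \<in> I \<union> J" by auto
  have xn: "x < n" using x aptD[OF I] aptD[OF J] by blast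
  have "bad n (ediag J n) (ediag I n)"
  proof (cases "x \<in> I")
    case True
    then have "Suc x \<in> J" "Suc x \<notin> I" using x aptD[OF I] by auto
    then show ?thesis unfolding bad_def using True xn
      by (intro exI[of _ x]) (auto simp: ediag_Bot ediag_Top)
  next
    case False
    then have "x \<in> J" "Suc x \<in> I" "Suc x \<notin> J" using x aptD[OF J] by auto
    then show ?thesis unfolding bad_def using xn aptD[OF J]
      by (intro exI[of _ x]) (auto simp: ediag_Bot ediag_Top)
  qed
  then show ?thesis unfolding compose_eq by simp
qed

lemma K3_good:
  assumes I: "I \<in> apt n" and J: "J \<in> apt n" and K: "I \<union> J \<in> apt n"
  shows "compose n n n (ediag J n) (ediag I n) = Some (ediag (I \<union> J) n)"
proof -
  have f1: "\<And>x. x \<in> I \<union> J \<Longrightarrow> Suc x \<notin> I \<and> Suc x \<notin> J" using aptD[OF K] by blast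
  have f0: "0 \<notin> I" "0 \<notin> J" using aptD[OF I] aptD[OF J] by blast+
  have f2: "x - 1 \<notin> I \<and> x - 1 \<notin> J" if "x \<in> I \<union> J" for x
  proof -
    have "0 < x" using that f0 by (metis Un_iff gr0I)
    then have "Suc (x - 1) = x" by simp
    then show ?thesis using f1[of "x - 1"] that by auto
  qed
  have f3: "Suc (x - 1) = x" if "x \<in> I \<union> J" for x
    using that f0 by (metis Un_iff Suc_pred' gr0I)
  have f4: "x < n" if "x \<in> I \<union> J" for x
    using that aptD[OF I] aptD[OF J] by blast
  have f5: "x - 1 < n" if "x \<in> I \<union> J" for x
    using f4[OF that] by simp
  have nb: "\<not> bad n (ediag J n) (ediag I n)"
  proof
    assume "bad n (ediag J n) (ediag I n)"
    then obtain x b c where x: "x < n" "ediag I n (Top x) = Top b" "ediag J n (Bot x) = Bot c" "b \<noteq> c"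
      unfolding bad_def by blast
    show False using x f1 by (auto simp: ediag_Bot ediag_Top split: if_splits)
  qed
  have "cf n n (ediag J n) (ediag I n) x = ediag (I \<union> J) n x" for x
    using f1 f0 f2 f3 f4 f5
    by (cases x) (auto simp: cf_def ediag_Bot ediag_Top split: pt.splits if_splits)
  then show ?thesis using nb unfolding compose_eq by auto
qed

lemma toggle:
  fixes G :: "nat set \<Rightarrow> 'k::field"
  assumes fin: "finite A" and finI: "\<And>I. I \<in> A \<Longrightarrow> finite I"
    and rem: "\<And>I. I \<in> A \<Longrightarrow> j \<in> I \<Longrightarrow> I - {j} \<in> A"
    and same: "\<And>I. I \<in> A \<Longrightarrow> j \<notin> I \<Longrightarrow> insert j I \<in> A \<Longrightarrow> G (insert j I) = G I"
    and zero: "\<And>I. I \<in> A \<Longrightarrow> j \<notin> I \<Longrightarrow> insert j I \<notin> A \<Longrightarrow> G I = 0"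
  shows "(\<Sum>I\<in>A. (-1) ^ card I * G I) = 0"
proof -
  define f where "f = (\<lambda>I. (-1) ^ card I * G I)"
  define A1 where "A1 = {I\<in>A. j \<in> I}"
  define B where "B = {I\<in>A. j \<notin> I \<and> insert j I \<in> A}"
  define Z where "Z = {I\<in>A. j \<notin> I \<and> insert j I \<notin> A}"
  have AU: "A = A1 \<union> (B \<union> Z)" unfolding A1_def B_def Z_def by auto
  have fins: "finite A1" "finite B" "finite Z" using fin unfolding A1_def B_def Z_def by auto
  have "sum f A = sum f A1 + (sum f B + sum f Z)"
    unfolding AU using fins
    by (subst sum.union_disjoint, auto simp: A1_def B_def Z_def intro: sum.union_disjoint)
  moreover have "sum f Z = 0" unfolding f_def Z_def using zero by (intro sum.neutral) auto
  moreover have "A1 = insert j ` B"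
  proof (intro equalityI subsetI)
    fix I assume "I \<in> A1"
    then have "I \<in> A" "j \<in> I" unfolding A1_def by auto
    then have "I - {j} \<in> B" "I = insert j (I - {j})" unfolding B_def using rem insert_Diff[of j I] by auto
    then show "I \<in> insert j ` B" by blast
  qed (auto simp: A1_def B_def)
  moreover have "inj_on (insert j) B"
    unfolding B_def by (rule inj_onI) (metis (no_types, lifting) Diff_insert_absorb mem_Collect_eq)
  moreover have "f (insert j I) = - f I" if "I \<in> B" for I
  proof -
    have "finite I" "j \<notin> I" "insert j I \<in> A" "I \<in> A" using that finI unfolding B_def by auto
    then show ?thesis unfolding f_def using same by simp
  qed
  ultimately have "sum f A = sum (\<lambda>I. - f I) B + sum f B"
    by (simp add: sum.reindex)
  then show ?thesis unfolding f_def[symmetric] by (simp add: sum_negf)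
qed


lemma jn_lin:
  "(jn n :: 'k::field mor) = (\<lambda>e. \<Sum>I\<in>apt n. (-1) ^ card I * dg (ediag I n) e)"
  by (rule jn_eq)

lemma jn_cup:
  assumes i: "i \<in> {1..n-1}"
  shows "comp (n - 2) n n (jn n :: 'k::field mor) (dg (cup_diag {i} n)) = (\<lambda>_. 0)"
proof
  fix e'
  obtain a where ia: "i = Suc a" using i by (cases i) auto
  have a: "Suc a < n" using i ia by auto
  let ?c = "cup_diag {Suc a} n"
  have ctl: "?c \<in> tl_diag (n - 2) n" using cup1_tl[OF i] ia by simp
  define G :: "nat set \<Rightarrow> 'k" where "G I = comp (n - 2) n n (dg (ediag I n)) (dg ?c) e'" for I
  have "comp (n - 2) n n (jn n :: 'k mor) (dg ?c) e' = (\<Sum>I\<in>apt n. (-1) ^ card I * G I)"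
    unfolding jn_lin G_def by (rule comp_lin_left[OF finite_apt])
  also have "\<dots> = 0"
  proof (rule toggle[where j = "Suc a"])
    show "finite (apt n)" by (rule finite_apt)
  next
    fix I assume "I \<in> apt n" then show "finite I" by (rule apt_finite)
  next
    fix I assume "I \<in> apt n" "Suc a \<in> I" then show "I - {Suc a} \<in> apt n" using apt_subset by blast
  next
    fix I assume I: "I \<in> apt n" and nI: "Suc a \<notin> I" and ins: "insert (Suc a) I \<in> apt n"
    then have h: "a \<notin> I" "Suc (Suc a) \<notin> I" using apt_insert[OF I, of "Suc a"] a by auto
    show "G (insert (Suc a) I) = G I"
      unfolding G_def comp_dg_dg[OF ediag_tl[OF I] ctl] comp_dg_dg[OF ediag_tl[OF ins] ctl]
      using K2[OF I a h(1) nI h(2)] by simp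
  next
    fix I assume I: "I \<in> apt n" and nI: "Suc a \<notin> I" and ins: "insert (Suc a) I \<notin> apt n"
    then have h: "a \<in> I \<or> Suc (Suc a) \<in> I" using apt_insert[OF I, of "Suc a"] a by auto
    show "G I = 0"
      unfolding G_def comp_dg_dg[OF ediag_tl[OF I] ctl] using K1[OF I a h] by simp
  qed
  finally show "comp (n - 2) n n (jn n :: 'k mor) (dg (cup_diag {i} n)) e' = 0" using ia by simp
qed

lemma jn_cap:
  assumes i: "i \<in> {1..n-1}"
  shows "comp n n (n - 2) (dg (cap_diag {i} n)) (jn n :: 'k::field mor) = (\<lambda>_. 0)"
proof
  fix e'
  obtain a where ia: "i = Suc a" using i by (cases i) auto
  have a: "Suc a < n" using i ia by auto
  let ?c = "cap_diag {Suc a} n"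
  have ctl: "?c \<in> tl_diag n (n - 2)" using cap1_tl[OF i] ia by simp
  define G :: "nat set \<Rightarrow> 'k" where "G I = comp n n (n - 2) (dg ?c) (dg (ediag I n)) e'" for I
  have "comp n n (n - 2) (dg ?c) (jn n :: 'k mor) e' = (\<Sum>I\<in>apt n. (-1) ^ card I * G I)"
    unfolding jn_lin G_def by (rule comp_lin_right[OF finite_apt])
  also have "\<dots> = 0"
  proof (rule toggle[where j = "Suc a"])
    show "finite (apt n)" by (rule finite_apt)
  next
    fix I assume "I \<in> apt n" then show "finite I" by (rule apt_finite)
  next
    fix I assume "I \<in> apt n" "Suc a \<in> I" then show "I - {Suc a} \<in> apt n" using apt_subset by blast
  next
    fix I assume I: "I \<in> apt n" and nI: "Suc a \<notin> I" and ins: "insert (Suc a) I \<in> apt n"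
    then have h: "a \<notin> I" "Suc (Suc a) \<notin> I" using apt_insert[OF I, of "Suc a"] a by auto
    show "G (insert (Suc a) I) = G I"
      unfolding G_def comp_dg_dg[OF ctl ediag_tl[OF I]] comp_dg_dg[OF ctl ediag_tl[OF ins]]
      using K2'[OF I a h(1) nI h(2)] by simp
  next
    fix I assume I: "I \<in> apt n" and nI: "Suc a \<notin> I" and ins: "insert (Suc a) I \<notin> apt n"
    then have h: "a \<in> I \<or> Suc (Suc a) \<in> I" using apt_insert[OF I, of "Suc a"] a by auto
    show "G I = 0"
      unfolding G_def comp_dg_dg[OF ctl ediag_tl[OF I]] using K1'[OF I a h] by simp
  qed
  finally show "comp n n (n - 2) (dg (cap_diag {i} n)) (jn n :: 'k mor) e' = 0" using ia by simp
qed

lemma jn_idem: "comp n n n (jn n :: 'k::field mor) (jn n) = jn n"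
proof
  fix e'
  define H :: "nat set \<Rightarrow> nat set \<Rightarrow> 'k" where
    "H J I = (if I \<union> J \<in> apt n then dg (ediag (I \<union> J) n) e' else 0)" for J I
  have compH: "comp n n n (dg (ediag J n)) (dg (ediag I n)) e' = H J I"
    if I: "I \<in> apt n" and J: "J \<in> apt n" for I J
  proof (cases "I \<union> J \<in> apt n")
    case True
    then show ?thesis unfolding comp_dg_dg[OF ediag_tl[OF J] ediag_tl[OF I]] H_def
      using K3_good[OF I J True] by simp
  next
    case False
    then show ?thesis unfolding comp_dg_dg[OF ediag_tl[OF J] ediag_tl[OF I]] H_def
      using K3_bad[OF I J False] by simp
  qed
  have inner: "comp n n n (dg (ediag J n)) (jn n :: 'k mor) e' = (\<Sum>I\<in>apt n. (-1) ^ card I * H J I)"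
    if J: "J \<in> apt n" for J
  proof -
    have "comp n n n (dg (ediag J n)) (jn n :: 'k mor) e'
        = (\<Sum>I\<in>apt n. (-1) ^ card I * comp n n n (dg (ediag J n)) (dg (ediag I n)) e')"
      unfolding jn_lin by (rule comp_lin_right[OF finite_apt])
    also have "\<dots> = (\<Sum>I\<in>apt n. (-1) ^ card I * H J I)"
      using compH J by (intro sum.cong refl) simp
    finally show ?thesis .
  qed
  have zeroJ: "(\<Sum>I\<in>apt n. (-1) ^ card I * H J I) = 0" if J: "J \<in> apt n" and ne: "J \<noteq> {}" for J
  proof -
    obtain j where j: "j \<in> J" using ne by blast
    show ?thesis
    proof (rule toggle[where j = j])
      show "finite (apt n)" by (rule finite_apt)
    next
      fix I assume "I \<in> apt n" then show "finite I" by (rule apt_finite)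
    next
      fix I assume "I \<in> apt n" "j \<in> I" then show "I - {j} \<in> apt n" using apt_subset by blast
    next
      fix I assume "I \<in> apt n" "j \<notin> I" "insert j I \<in> apt n"
      have "insert j I \<union> J = I \<union> J" using j by auto
      then show "H J (insert j I) = H J I" unfolding H_def by simp
    next
      fix I assume "I \<in> apt n" "j \<notin> I" and ins: "insert j I \<notin> apt n"
      have "I \<union> J \<notin> apt n"
      proof
        assume "I \<union> J \<in> apt n"
        moreover have "insert j I \<subseteq> I \<union> J" using j by auto
        ultimately show False using ins apt_subset by blast
      qed
      then show "H J I = 0" unfolding H_def by simp
    qed
  qed
  have emptyJ: "(\<Sum>I\<in>apt n. (-1) ^ card I * H {} I) = (jn n :: 'k mor) e'"
    unfolding jn_lin H_def by (intro sum.cong refl) simp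
  have "comp n n n (jn n :: 'k mor) (jn n) e'
      = (\<Sum>J\<in>apt n. (-1) ^ card J * comp n n n (dg (ediag J n)) (jn n :: 'k mor) e')"
    by (subst (1) jn_lin, rule comp_lin_left[OF finite_apt])
  also have "\<dots> = (\<Sum>J\<in>apt n. (-1) ^ card J * (\<Sum>I\<in>apt n. (-1) ^ card I * H J I))"
    using inner by (intro sum.cong refl) simp
  also have "\<dots> = (-1) ^ card ({}::nat set) * (\<Sum>I\<in>apt n. (-1) ^ card I * H {} I)
       + (\<Sum>J\<in>apt n - {{}}. (-1) ^ card J * (\<Sum>I\<in>apt n. (-1) ^ card I * H J I))"
    using finite_apt apt_empty by (rule sum.remove)
  also have "(\<Sum>J\<in>apt n - {{}}. (-1) ^ card J * (\<Sum>I\<in>apt n. (-1) ^ card I * H J I)) = 0"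
    using zeroJ by (intro sum.neutral) auto
  finally show "comp n n n (jn n :: 'k mor) (jn n) e' = (jn n :: 'k mor) e'" using emptyJ by simp
qed

theorem mainTheorem8:
  fixes n :: nat
  shows "JW_props n (jn n :: 'k::field mor) \<and>
         (\<forall>p :: 'k mor. JW_props n p \<longrightarrow> p = jn n)"
proof
  show "JW_props n (jn n :: 'k mor)"
    unfolding JW_props_def using jn_prop1 jn_idem jn_cap jn_cup by blast
next
  show "\<forall>p :: 'k mor. JW_props n p \<longrightarrow> p = jn n"
  proof (intro allI impI)
    fix p :: "'k mor" assume "JW_props n p"
    then obtain xp where xp: "\<forall>e. e \<notin> Low n \<longrightarrow> xp e = 0" "p = (\<lambda>e. dg (id_diag n) e + xp e)"
      and pc: "\<forall>i\<in>{1..n-1}. comp (n - 2) n n p (dg (cup_diag {i} n)) = (\<lambda>_. 0)"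
      unfolding JW_props_def Low_def by blast
    obtain xq :: "'k mor" where xq: "\<forall>e. e \<notin> Low n \<longrightarrow> xq e = 0" "jn n = (\<lambda>e. dg (id_diag n) e + xq e)"
      using jn_prop1[of n] unfolding Low_def by blast
    have qc: "\<forall>i\<in>{1..n-1}. comp (n - 2) n n (jn n :: 'k mor) (dg (cup_diag {i} n)) = (\<lambda>_. 0)"
      using jn_cup by blast
    show "p = jn n"
      by (rule uniq[OF cup1_tl xp(2) xp(1) xq(2) xq(1) pc qc])
  qed
qed


end
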